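(* Let $q\ge 7$ be an odd integer. Then the achromatic number of $K_6\square K_q$ is at least $2q+3$.
   Context: For a finite simple graph $G$ and a finite colour set $C$, a vertex colouring $f:V(G)\to C$ is complete if for any two distinct colours $c_1,c_2\in C$ there is an edge $v_1v_2\in E(G)$ with $f(v_i)=c_i$, $i=1,2$. The achromatic number of $G$ is the maximum number of colours in a proper complete vertex colouring of $G$. The Cartesian product $G_1\square G_2$ has vertex set $V(G_1)\times V(G_2)$, with $(u_1,u_2)$ adjacent to $(w_1,w_2)$ iff either $u_1w_1\in E(G_1)$ and $u_2=w_2$, or $u_2w_2\in E(G_2)$ and $u_1=w_1$. *)

theory Defs
  imports Main
begin

text \<open>Finite simple graphs are given by a vertex set V and an edge relation E
  (intended symmetric and irreflexive, restricted to V).\<close>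

definition proper_colouring :: "'a set \<Rightarrow> ('a \<Rightarrow> 'a \<Rightarrow> bool) \<Rightarrow> ('a \<Rightarrow> 'c) \<Rightarrow> bool" where
  "proper_colouring V E f \<longleftrightarrow> (\<forall>u\<in>V. \<forall>w\<in>V. E u w \<longrightarrow> f u \<noteq> f w)"

definition complete_colouring :: "'a set \<Rightarrow> ('a \<Rightarrow> 'a \<Rightarrow> bool) \<Rightarrow> 'c set \<Rightarrow> ('a \<Rightarrow> 'c) \<Rightarrow> bool" where
  "complete_colouring V E C f \<longleftrightarrow>
     (\<forall>c1\<in>C. \<forall>c2\<in>C. c1 \<noteq> c2 \<longrightarrow>
        (\<exists>v1\<in>V. \<exists>v2\<in>V. E v1 v2 \<and> f v1 = c1 \<and> f v2 = c2))"

definition achromatic_number :: "'a set \<Rightarrow> ('a \<Rightarrow> 'a \<Rightarrow> bool) \<Rightarrow> nat" where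
  "achromatic_number V E = Max {k. \<exists>f :: 'a \<Rightarrow> nat. f ` V \<subseteq> {0..<k} \<and>
        proper_colouring V E f \<and> complete_colouring V E {0..<k} f}"

definition complete_graph_edge :: "nat \<Rightarrow> nat \<Rightarrow> bool" where
  "complete_graph_edge u w \<longleftrightarrow> u \<noteq> w"

definition cart_prod_edge ::
  "('a \<Rightarrow> 'a \<Rightarrow> bool) \<Rightarrow> ('b \<Rightarrow> 'b \<Rightarrow> bool) \<Rightarrow> 'a \<times> 'b \<Rightarrow> 'a \<times> 'b \<Rightarrow> bool" where
  "cart_prod_edge E1 E2 x y \<longleftrightarrow>
     (E1 (fst x) (fst y) \<and> snd x = snd y) \<or> (E2 (snd x) (snd y) \<and> fst x = fst y)"

end

theory Submission
  imports Defs
begin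

definition pv :: "nat \<Rightarrow> nat \<Rightarrow> nat" where
  "pv m i = (if i = 0 then m - 1 else i - 1)"

definition nx :: "nat \<Rightarrow> nat \<Rightarrow> nat" where
  "nx m i = (if i = m - 1 then 0 else i + 1)"

lemma pv_lt: "m \<ge> 2 \<Longrightarrow> i < m \<Longrightarrow> pv m i < m"
  unfolding pv_def by auto

lemma pv_neq: "m \<ge> 2 \<Longrightarrow> i < m \<Longrightarrow> pv m i \<noteq> i"
  unfolding pv_def by auto

lemma pv_inj: "m \<ge> 2 \<Longrightarrow> i < m \<Longrightarrow> k < m \<Longrightarrow> pv m i = pv m k \<Longrightarrow> i = k"
  unfolding pv_def by (auto split: if_splits)

lemma nx_lt: "m \<ge> 2 \<Longrightarrow> i < m \<Longrightarrow> nx m i < m"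
  unfolding nx_def by auto

lemma pv_nx: "m \<ge> 2 \<Longrightarrow> i < m \<Longrightarrow> pv m (nx m i) = i"
  unfolding nx_def pv_def by auto

definition mc :: "nat \<Rightarrow> nat \<Rightarrow> nat" where
  "mc r j = (if r = 0 then (j+1) mod 3 else if r = 5 then (j+2) mod 3
     else if r = 1 then 3 + (j+1) mod 3 else if r = 4 then 3 + (j+2) mod 3
     else if r = 2 then 6 + (j+1) mod 3 else 6 + (j+2) mod 3)"

definition colf :: "nat \<Rightarrow> nat \<times> nat \<Rightarrow> nat" where
  "colf m v = (let r = fst v; j = snd v in
    if j < 3 then mc r j
    else if j < 3 + m then (let i = j - 3 in
       if r = 0 then 9+i else if r = 1 then 9+2*m+i else if r = 2 then 9 + pv m i
       else if r = 3 then 9+m+i else if r = 4 then 9+m+pv m i else 9+3*m+i)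
    else (let i = j - 3 - m in
       if r = 0 then 9+m+i else if r = 1 then 9+i else if r = 2 then 9+3*m+i
       else if r = 3 then 9+2*m+i else if r = 4 then 9+3*m+pv m i else 9+2*m+pv m i))"

lemma six_cases: "(r::nat) < 6 \<Longrightarrow> r = 0 \<or> r = 1 \<or> r = 2 \<or> r = 3 \<or> r = 4 \<or> r = 5"
  by auto

lemma three_cases: "(r::nat) < 3 \<Longrightarrow> r = 0 \<or> r = 1 \<or> r = 2"
  by auto

lemma ex6: "(\<exists>r<6. P (r::nat)) = (P 0 \<or> P 1 \<or> P 2 \<or> P 3 \<or> P 4 \<or> P 5)"
  by (auto simp: numeral_eq_Suc less_Suc_eq)

lemma ex3: "(\<exists>r<3. P (r::nat)) = (P 0 \<or> P 1 \<or> P 2)"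
  by (auto simp: numeral_eq_Suc less_Suc_eq)

lemma colL:
  assumes "3 \<le> j" "j < 3 + m"
  shows "colf m (0,j) = 9+(j-3)" "colf m (Suc 0,j) = 9+2*m+(j-3)" "colf m (2,j) = 9+pv m (j-3)"
    "colf m (3,j) = 9+m+(j-3)" "colf m (4,j) = 9+m+pv m (j-3)" "colf m (5,j) = 9+3*m+(j-3)"
  using assms by (simp_all add: colf_def Let_def)

lemma colH:
  assumes "3 + m \<le> j"
  shows "colf m (0,j) = 9+m+(j-3-m)" "colf m (Suc 0,j) = 9+(j-3-m)" "colf m (2,j) = 9+3*m+(j-3-m)"
    "colf m (3,j) = 9+2*m+(j-3-m)" "colf m (4,j) = 9+3*m+pv m (j-3-m)" "colf m (5,j) = 9+2*m+pv m (j-3-m)"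
  using assms by (simp_all add: colf_def Let_def)

lemma colM:
  assumes "j < 3"
  shows "colf m (r,j) = mc r j"
  using assms by (simp add: colf_def Let_def)

lemma col_proper:
  assumes m: "m \<ge> 2" and r1: "r1 < 6" and r2: "r2 < 6" and j: "j < 2*m+3" and ne: "r1 \<noteq> r2"
  shows "colf m (r1, j) \<noteq> colf m (r2, j)"
proof -
  consider "j < 3" | "3 \<le> j" "j < 3 + m" | "3 + m \<le> j" by linarith
  then show ?thesis
  proof cases
    case 1
    then have "j = 0 \<or> j = 1 \<or> j = 2" by auto
    then show ?thesis using six_cases[OF r1] six_cases[OF r2] ne 1
      by (elim disjE) (simp_all add: colM mc_def)
  next
    case 2
    have a: "pv m (j-3) < m" "pv m (j-3) \<noteq> j - 3" using pv_lt pv_neq m 2 by auto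
    show ?thesis
      by (insert six_cases[OF r1] six_cases[OF r2] ne a 2 m j) (elim disjE; (simp add: colL[OF 2])?; linarith?)
  next
    case 3
    have a: "pv m (j-3-m) < m" "pv m (j-3-m) \<noteq> j - 3 - m" "j - 3 - m < m" using pv_lt pv_neq m 3 j by auto
    show ?thesis
      by (insert six_cases[OF r1] six_cases[OF r2] ne a 3 m j) (elim disjE; (simp add: colH[OF 3])?; linarith?)
  qed
qed

lemma mc_lt: "mc r j < 9" unfolding mc_def by auto

lemma colf_lt9: "j < 3 \<Longrightarrow> colf m (r,j) < 9"
  by (simp add: colM mc_lt)

lemma colf_ge9: "3 \<le> j \<Longrightarrow> colf m (r,j) \<ge> 9"
  by (auto simp add: colf_def Let_def)

lemma row_proper:
  assumes m: "m \<ge> 2" and r: "r < 6" and j1: "j1 < 2*m+3" and j2: "j2 < 2*m+3" and ne: "j1 \<noteq> j2"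
  shows "colf m (r, j1) \<noteq> colf m (r, j2)"
proof -
  have B: "\<And>j1 j2. j1 < 3 \<Longrightarrow> j2 < 3 \<Longrightarrow> j1 \<noteq> j2 \<Longrightarrow> mc r j1 \<noteq> mc r j2"
  proof -
    fix j1 j2 :: nat assume "j1 < 3" "j2 < 3" "j1 \<noteq> j2"
    then have "j1 = 0 \<or> j1 = 1 \<or> j1 = 2" "j2 = 0 \<or> j2 = 1 \<or> j2 = 2" by auto
    then show "mc r j1 \<noteq> mc r j2" using six_cases[OF r] \<open>j1 \<noteq> j2\<close>
      by (elim disjE) (simp_all add: mc_def)
  qed
  have P: "\<And>i. i < m \<Longrightarrow> pv m i < m" using pv_lt m by auto
  have I: "\<And>i k. i < m \<Longrightarrow> k < m \<Longrightarrow> i \<noteq> k \<Longrightarrow> pv m i \<noteq> pv m k" using pv_inj m by blast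
  have reg: "\<And>j. j < 2*m+3 \<Longrightarrow> j < 3 \<or> (3 \<le> j \<and> j < 3 + m) \<or> (3 + m \<le> j \<and> j - 3 - m < m)" by auto
  show ?thesis
    using reg[OF j1] reg[OF j2]
  proof (elim disjE conjE)
    assume "j1 < 3" "j2 < 3" then show ?thesis using B ne by (simp add: colM)
  next
    assume a: "j1 < 3" "3 \<le> j2" "j2 < 3 + m"
    show ?thesis using colf_lt9[of j1 m r] colf_lt9[of j2 m r] colf_ge9[of j1 m r] colf_ge9[of j2 m r] a by linarith
  next
    assume a: "j1 < 3" "3 + m \<le> j2"
    show ?thesis using colf_lt9[of j1 m r] colf_lt9[of j2 m r] colf_ge9[of j1 m r] colf_ge9[of j2 m r] a by linarith
  next
    assume a: "j2 < 3" "3 \<le> j1" "j1 < 3 + m"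
    show ?thesis using colf_lt9[of j1 m r] colf_lt9[of j2 m r] colf_ge9[of j1 m r] colf_ge9[of j2 m r] a by linarith
  next
    assume a: "j2 < 3" "3 + m \<le> j1"
    show ?thesis using colf_lt9[of j1 m r] colf_lt9[of j2 m r] colf_ge9[of j1 m r] colf_ge9[of j2 m r] a by linarith
  next
    assume a: "3 \<le> j1" "j1 < 3 + m" "3 \<le> j2" "j2 < 3 + m"
    have "pv m (j1-3) \<noteq> pv m (j2-3)" using I a ne by auto
    then show ?thesis using six_cases[OF r] a ne by (elim disjE) (simp_all add: colL)
  next
    assume a: "3 \<le> j1" "j1 < 3 + m" "3 + m \<le> j2" "j2 - 3 - m < m"
    have b: "j1 - 3 < m" using a by auto
    show ?thesis
      by (insert six_cases[OF r] a b P[OF b] P[OF a(4)]) (elim disjE; (simp add: colL colH)?; linarith?)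
  next
    assume a: "3 \<le> j2" "j2 < 3 + m" "3 + m \<le> j1" "j1 - 3 - m < m"
    have b: "j2 - 3 < m" using a by auto
    show ?thesis
      by (insert six_cases[OF r] a b P[OF b] P[OF a(4)]) (elim disjE; (simp add: colL colH)?; linarith?)
  next
    assume a: "3 + m \<le> j1" "j1 - 3 - m < m" "3 + m \<le> j2" "j2 - 3 - m < m"
    have "pv m (j1-3-m) \<noteq> pv m (j2-3-m)" using I a ne by auto
    then show ?thesis using six_cases[OF r] a ne by (elim disjE) (simp_all add: colH)
  qed
qed


definition rowset :: "nat \<Rightarrow> nat \<Rightarrow> nat set" where
  "rowset m c = (if c < 3 then {0,5} else if c < 6 then {1,4} else if c < 9 then {2,3}
     else if c < 9 + m then {0,1,2} else if c < 9 + 2*m then {0,3,4}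
     else if c < 9 + 3*m then {1,3,5} else {2,4,5})"

lemma rowset_lt: "r \<in> rowset m c \<Longrightarrow> r < 6"
  unfolding rowset_def by (auto split: if_splits)

lemma rowset_meet:
  assumes "c1 < 9 + 4*m" "c2 < 9 + 4*m" "\<not> (c1 < 9 \<and> c2 < 9)"
  shows "\<exists>r. r \<in> rowset m c1 \<and> r \<in> rowset m c2"
  using assms unfolding rowset_def by (auto split: if_splits)

lemma nine_cases: "(c::nat) < 9 \<Longrightarrow> c = 0 \<or> c = 1 \<or> c = 2 \<or> c = 3 \<or> c = 4 \<or> c = 5 \<or> c = 6 \<or> c = 7 \<or> c = 8"
  by auto

lemma match_occ:
  assumes "c < 9" "r \<in> rowset m c"
  shows "\<exists>j<3. mc r j = c"
  using nine_cases[OF assms(1)] assms(2)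
  by (elim disjE) (auto simp: rowset_def ex3 mc_def)

lemma match_pair:
  assumes "c1 < 9" "c2 < 9" "c1 \<noteq> c2"
  shows "\<exists>j<3. \<exists>r1<6. \<exists>r2<6. mc r1 j = c1 \<and> mc r2 j = c2"
  using nine_cases[OF assms(1)] nine_cases[OF assms(2)] assms(3)
  by (elim disjE) (simp_all add: ex3 ex6 mc_def)

lemma occ:
  assumes m: "m \<ge> 2" and c: "c < 9 + 4*m" and r: "r \<in> rowset m c"
  shows "\<exists>j<2*m+3. colf m (r,j) = c"
proof -
  consider "c < 9" | "9 \<le> c" "c < 9 + m" | "9 + m \<le> c" "c < 9 + 2*m"
    | "9 + 2*m \<le> c" "c < 9 + 3*m" | "9 + 3*m \<le> c" by linarith
  then show ?thesis
  proof cases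
    case 1
    then obtain j where "j < 3" "mc r j = c" using match_occ r by blast
    then show ?thesis using colM[of j m r] by (intro exI[of _ j]) auto
  next
    case 2
    define i where "i = c - 9"
    have i: "i < m" "c = 9 + i" using 2 i_def by auto
    have n: "nx m i < m" "pv m (nx m i) = i" using nx_lt pv_nx m i by auto
    have rr: "r = 0 \<or> r = 1 \<or> r = 2" using r 2 unfolding rowset_def by (auto split: if_splits)
    then show ?thesis
    proof (elim disjE)
      assume "r = 0" then show ?thesis using colL(1)[of "3+i" m] i by (intro exI[of _ "3+i"]) auto
    next
      assume "r = 1" then show ?thesis using colH(2)[of m "3+m+i"] i by (intro exI[of _ "3+m+i"]) auto
    next
      assume "r = 2" then show ?thesis using colL(3)[of "3+nx m i" m] i n by (intro exI[of _ "3+nx m i"]) auto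
    qed
  next
    case 3
    define i where "i = c - 9 - m"
    have i: "i < m" "c = 9 + m + i" using 3 i_def by auto
    have n: "nx m i < m" "pv m (nx m i) = i" using nx_lt pv_nx m i by auto
    have rr: "r = 0 \<or> r = 3 \<or> r = 4" using r 3 unfolding rowset_def by (auto split: if_splits)
    then show ?thesis
    proof (elim disjE)
      assume "r = 0" then show ?thesis using colH(1)[of m "3+m+i"] i by (intro exI[of _ "3+m+i"]) auto
    next
      assume "r = 3" then show ?thesis using colL(4)[of "3+i" m] i by (intro exI[of _ "3+i"]) auto
    next
      assume "r = 4" then show ?thesis using colL(5)[of "3+nx m i" m] i n by (intro exI[of _ "3+nx m i"]) auto
    qed
  next
    case 4
    define i where "i = c - 9 - 2*m"
    have i: "i < m" "c = 9 + 2*m + i" using 4 i_def by auto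
    have n: "nx m i < m" "pv m (nx m i) = i" using nx_lt pv_nx m i by auto
    have rr: "r = 1 \<or> r = 3 \<or> r = 5" using r 4 unfolding rowset_def by (auto split: if_splits)
    then show ?thesis
    proof (elim disjE)
      assume "r = 1" then show ?thesis using colL(2)[of "3+i" m] i by (intro exI[of _ "3+i"]) auto
    next
      assume "r = 3" then show ?thesis using colH(4)[of m "3+m+i"] i by (intro exI[of _ "3+m+i"]) auto
    next
      assume "r = 5" then show ?thesis using colH(6)[of m "3+m+nx m i"] i n by (intro exI[of _ "3+m+nx m i"]) auto
    qed
  next
    case 5
    define i where "i = c - 9 - 3*m"
    have i: "i < m" "c = 9 + 3*m + i" using 5 c i_def by auto
    have n: "nx m i < m" "pv m (nx m i) = i" using nx_lt pv_nx m i by auto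
    have rr: "r = 2 \<or> r = 4 \<or> r = 5" using r 5 unfolding rowset_def by (auto split: if_splits)
    then show ?thesis
    proof (elim disjE)
      assume "r = 2" then show ?thesis using colH(3)[of m "3+m+i"] i by (intro exI[of _ "3+m+i"]) auto
    next
      assume "r = 4" then show ?thesis using colH(5)[of m "3+m+nx m i"] i n by (intro exI[of _ "3+m+nx m i"]) auto
    next
      assume "r = 5" then show ?thesis using colL(6)[of "3+i" m] i by (intro exI[of _ "3+i"]) auto
    qed
  qed
qed


abbreviation "GE \<equiv> cart_prod_edge complete_graph_edge complete_graph_edge"

lemma main_in:
  assumes m: "m \<ge> 2"
  shows "colf m ` ({0..<6} \<times> {0..<2*m+3}) \<subseteq> {0..<9+4*m}
     \<and> proper_colouring ({0..<6} \<times> {0..<2*m+3}) GE (colf m)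
     \<and> complete_colouring ({0..<6} \<times> {0..<2*m+3}) GE {0..<9+4*m} (colf m)"
proof (intro conjI)
  show "colf m ` ({0..<6} \<times> {0..<2*m+3}) \<subseteq> {0..<9+4*m}"
  proof
    fix c assume "c \<in> colf m ` ({0..<6} \<times> {0..<2*m+3})"
    then obtain r j where rj: "r < 6" "j < 2*m+3" "c = colf m (r,j)" by auto
    have "j < 3 \<or> (3 \<le> j \<and> j < 3 + m) \<or> (3 + m \<le> j \<and> j - 3 - m < m)" using rj by auto
    moreover have "pv m (j-3) < m" if "3 \<le> j" "j < 3 + m" using pv_lt m that by auto
    moreover have "pv m (j-3-m) < m" if "3 + m \<le> j" "j - 3 - m < m" using pv_lt m that by auto
    ultimately show "c \<in> {0..<9+4*m}" using rj six_cases[OF rj(1)] colf_lt9[of j m r]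
      by (auto simp: colL colH)
  qed
next
  show "proper_colouring ({0..<6} \<times> {0..<2*m+3}) GE (colf m)"
    unfolding proper_colouring_def cart_prod_edge_def complete_graph_edge_def
    using col_proper[OF m] row_proper[OF m] by auto
next
  show "complete_colouring ({0..<6} \<times> {0..<2*m+3}) GE {0..<9+4*m} (colf m)"
    unfolding complete_colouring_def
  proof (intro ballI impI)
    fix c1 c2 assume c: "c1 \<in> {0..<9+4*m}" "c2 \<in> {0..<9+4*m}" "c1 \<noteq> c2"
    show "\<exists>v1\<in>{0..<6} \<times> {0..<2*m+3}. \<exists>v2\<in>{0..<6} \<times> {0..<2*m+3}.
            GE v1 v2 \<and> colf m v1 = c1 \<and> colf m v2 = c2"
    proof (cases "c1 < 9 \<and> c2 < 9")
      case True
      then obtain j r1 r2 where w: "j < 3" "r1 < 6" "r2 < 6" "mc r1 j = c1" "mc r2 j = c2"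
        using match_pair c(3) by blast
      have "r1 \<noteq> r2" using w c(3) by auto
      then show ?thesis using w colM[of j m r1] colM[of j m r2]
        by (intro bexI[of _ "(r1,j)"] bexI[of _ "(r2,j)"])
           (auto simp: cart_prod_edge_def complete_graph_edge_def)
    next
      case False
      then obtain r where r: "r \<in> rowset m c1" "r \<in> rowset m c2"
        using rowset_meet[of c1 m c2] c False by auto
      obtain j1 where j1: "j1 < 2*m+3" "colf m (r,j1) = c1" using occ[OF m _ r(1)] c by auto
      obtain j2 where j2: "j2 < 2*m+3" "colf m (r,j2) = c2" using occ[OF m _ r(2)] c by auto
      have "j1 \<noteq> j2" using j1 j2 c(3) by auto
      then show ?thesis using j1 j2 rowset_lt[OF r(1)]
        by (intro bexI[of _ "(r,j1)"] bexI[of _ "(r,j2)"])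
           (auto simp: cart_prod_edge_def complete_graph_edge_def)
    qed
  qed
qed

lemma bound:
  assumes "f ` V \<subseteq> {0..<k}" "complete_colouring V E {0..<k} (f :: 'a \<Rightarrow> nat)" "finite V"
  shows "k \<le> card V + 1"
proof (cases "k \<le> 1")
  case True then show ?thesis by auto
next
  case False
  have "{0..<k} \<subseteq> f ` V"
  proof
    fix c assume c: "c \<in> {0..<k}"
    define c' where "c' = (if c = 0 then 1 else (0::nat))"
    have "c' \<in> {0..<k}" "c \<noteq> c'" using False c unfolding c'_def by auto
    then obtain v1 where "v1 \<in> V" "f v1 = c" using assms(2) c unfolding complete_colouring_def by blast
    then show "c \<in> f ` V" by auto
  qed
  then have "card {0..<k} \<le> card (f ` V)" using assms(3) by (intro card_mono) auto
  also have "\<dots> \<le> card V" by (rule card_image_le[OF assms(3)])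
  finally show ?thesis by simp
qed

theorem proposition3:
  fixes q :: nat
  assumes "q \<ge> 7" and "odd q"
  shows "achromatic_number ({0..<6} \<times> {0..<q})
           (cart_prod_edge complete_graph_edge complete_graph_edge) \<ge> 2 * q + 3"
proof -
  define m where "m = (q - 3) div 2"
  have qm: "q = 2*m+3" "m \<ge> 2" using assms unfolding m_def by (auto elim!: oddE)
  let ?S = "{k. \<exists>f :: nat \<times> nat \<Rightarrow> nat. f ` ({0..<6} \<times> {0..<q}) \<subseteq> {0..<k} \<and>
        proper_colouring ({0..<6} \<times> {0..<q}) GE f \<and> complete_colouring ({0..<6} \<times> {0..<q}) GE {0..<k} f}"
  have "9 + 4*m \<in> ?S" using main_in[OF qm(2)] qm(1) by blast
  moreover have "finite ?S"
  proof (rule finite_subset)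
    show "?S \<subseteq> {..card ({0..<6::nat} \<times> {0..<q}) + 1}"
      using bound[where V="{0..<6::nat} \<times> {0..<q}"] by auto
  qed auto
  ultimately have "9 + 4*m \<le> Max ?S" by (simp add: Max_ge)
  then show ?thesis unfolding achromatic_number_def using qm(1) by simp
qed

end
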